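(* Let $V$ be a set of $n$ vertices partitioned into $k$ clusters of sizes $s_1\ge s_2\ge\dots\ge s_k$ (so $\sum_i s_i=n$). If $s_k<\frac{n}{4k}$, then there exists $h<k$ such that $$s_h\ge\frac{n}{2k}-h\cdot\frac{n}{4k^2}\quad\text{and}\quad s_{h+1}<\frac{n}{2k}-(h+1)\cdot\frac{n}{4k^2}.$$ Moreover, $\sum_{i\le h}s_i\ge n/2$. *)

theory Defs
  imports Complex_Main
begin

end

theory Submission
  imports Defs
begin

theorem lemma4p2:
  fixes V :: "'a set" and C :: "nat \<Rightarrow> 'a set" and k n :: nat
  assumes "finite V" and "card V = n" and "0 < k"
    and "\<forall>i\<in>{1..k}. C i \<noteq> {}"
    and "\<forall>i\<in>{1..k}. \<forall>j\<in>{1..k}. i \<noteq> j \<longrightarrow> C i \<inter> C j = {}"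
    and "(\<Union>i\<in>{1..k}. C i) = V"
    and "\<forall>i j. 1 \<le> i \<longrightarrow> i \<le> j \<longrightarrow> j \<le> k \<longrightarrow> card (C j) \<le> card (C i)"
    and "real (card (C k)) < real n / (4 * real k)"
  shows "\<exists>h. 1 \<le> h \<and> h < k
    \<and> real (card (C h)) \<ge> real n / (2 * real k) - real h * (real n / (4 * real k ^ 2))
    \<and> real (card (C (h + 1))) < real n / (2 * real k) - real (h + 1) * (real n / (4 * real k ^ 2))
    \<and> (\<Sum>i=1..h. real (card (C i))) \<ge> real n / 2"
proof -
  define s where "s i = real (card (C i))" for i
  define t where "t i = real n / (2 * real k) - real i * (real n / (4 * real k ^ 2))" for i
  have fin: "\<forall>i\<in>{1..k}. finite (C i)" using assms(1,6) by (metis UN_upper finite_subset)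
  have "card V = (\<Sum>i=1..k. card (C i))"
    using card_UN_disjoint[of "{1..k}" C] fin assms(5,6) by simp
  hence sumall: "(\<Sum>i=1..k. s i) = real n" using assms(2) unfolding s_def by (metis of_nat_sum)
  have kpos: "real k > 0" using assms(3) by simp
  have npos: "real n > 0"
  proof -
    have "0 \<le> s k" unfolding s_def by simp
    hence "0 < real n / (4 * real k)" using assms(8) unfolding s_def by linarith
    thus ?thesis using kpos by (simp add: zero_less_divide_iff)
  qed
  have k2: "k \<ge> 2"
  proof (rule ccontr)
    assume "\<not> k \<ge> 2"
    hence "k = 1" using assms(3) by simp
    hence "s k = real n" using sumall by simp
    thus False using assms(8) npos \<open>k = 1\<close> unfolding s_def by simp
  qed
  have tk: "t k = real n / (4 * real k)"
    unfolding t_def using kpos by (simp add: field_simps power2_eq_square)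
  define P where "P j = (2 \<le> j \<and> j \<le> k \<and> s j < t j)" for j
  have Pk: "P k" using k2 assms(8) tk unfolding P_def s_def by simp
  define j where "j = (LEAST j. P j)"
  have Pj: "P j" using Pk LeastI unfolding j_def by metis
  have jmin: "\<And>i. i < j \<Longrightarrow> \<not> P i" unfolding j_def using not_less_Least by blast
  define h where "h = j - 1"
  have hj: "j = h + 1" "1 \<le> h" "h < k" using Pj unfolding h_def P_def by auto
  have s1: "s 1 \<ge> t 1"
  proof -
    have "\<forall>i\<in>{1..k}. s i \<le> s 1" using assms(7) unfolding s_def by auto
    hence "(\<Sum>i=1..k. s i) \<le> (\<Sum>i=1..k. s 1)" by (intro sum_mono) auto
    hence "real n \<le> real k * s 1" using sumall by simp
    hence "real n / real k \<le> s 1" using kpos by (simp add: field_simps)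
    moreover have "t 1 \<le> real n / real k" unfolding t_def using npos kpos
      by (simp add: field_simps)
    ultimately show ?thesis by linarith
  qed
  have sh: "s h \<ge> t h"
  proof (cases "h = 1")
    case True thus ?thesis using s1 by simp
  next
    case False
    hence "\<not> P h" using jmin hj by simp
    thus ?thesis using False hj unfolding P_def by auto
  qed
  have sh1: "s (h+1) < t (h+1)" using Pj hj unfolding P_def by simp
  have tle: "t (h+1) \<le> real n / (2 * real k)" unfolding t_def using npos kpos by simp
  have "(\<Sum>i=h+1..k. s i) \<le> (\<Sum>i=h+1..k. s (h+1))"
    using assms(7) hj unfolding s_def by (intro sum_mono) auto
  also have "\<dots> = real (k - h) * s (h+1)" using hj by simp
  also have "\<dots> \<le> real (k - h) * (real n / (2 * real k))"
    using sh1 tle by (intro mult_left_mono) auto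
  also have "\<dots> \<le> real k * (real n / (2 * real k))"
    using npos kpos by (intro mult_right_mono) auto
  also have "\<dots> = real n / 2" using kpos by simp
  finally have tail: "(\<Sum>i=h+1..k. s i) \<le> real n / 2" .
  have split: "(\<Sum>i=1..k. s i) = (\<Sum>i=1..h. s i) + (\<Sum>i=h+1..k. s i)"
    using hj sum.atLeastLessThan_concat[of 1 "h+1" "k+1" s]
    by (simp add: atLeastLessThanSuc_atLeastAtMost)
  have "(\<Sum>i=1..h. s i) \<ge> real n / 2" using split sumall tail by linarith
  thus ?thesis using hj sh sh1 unfolding s_def t_def by blast
qed

end
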